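(* Fix an integer $r\geq 3$, and let $G$ be a balanced $r$-partite graph on $rn$ vertices with $\delta^*(G)>\left(1-\frac{1}{r-1}\right)n$. Then for any vertices $u,v\in V(G)$ there exist copies $K$ and $K'$ of $K_r$ in $G$ such that $u\in V(K)$, $v\in V(K')$, and $K$ and $K'$ have at least one vertex in common.
   Context: For an $r$-partite graph $G$ with vertex classes $V_1,\dots,V_r$, $G$ is balanced if all classes have the same size, and $\delta^*(G)$ is the largest integer $m$ such that for all $i\neq j$ every vertex of $V_i$ has at least $m$ neighbours in $V_j$. *)

theory Defs
  imports Complex_Main
begin

definition r_partite :: "nat \<Rightarrow> 'a set \<Rightarrow> ('a \<Rightarrow> 'a \<Rightarrow> bool) \<Rightarrow> (nat \<Rightarrow> 'a set) \<Rightarrow> bool" where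
  "r_partite r V E P \<longleftrightarrow>
     finite V \<and>
     (\<forall>x y. E x y \<longrightarrow> x \<in> V \<and> y \<in> V) \<and>
     (\<forall>x y. E x y \<longrightarrow> E y x) \<and>
     (\<forall>x. \<not> E x x) \<and>
     (\<Union>i<r. P i) = V \<and>
     (\<forall>i<r. \<forall>j<r. i \<noteq> j \<longrightarrow> P i \<inter> P j = {}) \<and>
     (\<forall>i<r. \<forall>x\<in>P i. \<forall>y\<in>P i. \<not> E x y)"

definition balanced :: "nat \<Rightarrow> (nat \<Rightarrow> 'a set) \<Rightarrow> nat \<Rightarrow> bool" where
  "balanced r P n \<longleftrightarrow> (\<forall>i<r. card (P i) = n)"

definition delta_star :: "nat \<Rightarrow> ('a \<Rightarrow> 'a \<Rightarrow> bool) \<Rightarrow> (nat \<Rightarrow> 'a set) \<Rightarrow> nat" where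
  "delta_star r E P = (GREATEST m. \<forall>i<r. \<forall>j<r. i \<noteq> j \<longrightarrow>
       (\<forall>x\<in>P i. m \<le> card {y \<in> P j. E x y}))"

definition is_Kr :: "nat \<Rightarrow> 'a set \<Rightarrow> ('a \<Rightarrow> 'a \<Rightarrow> bool) \<Rightarrow> 'a set \<Rightarrow> bool" where
  "is_Kr r V E K \<longleftrightarrow> K \<subseteq> V \<and> finite K \<and> card K = r \<and>
     (\<forall>x\<in>K. \<forall>y\<in>K. x \<noteq> y \<longrightarrow> E x y)"

end

theory Submission
  imports Defs
begin

lemma free_class:
  assumes rp: "r_partite r V E P" and S: "S \<subseteq> V" and c: "card S < r"
  shows "\<exists>j<r. S \<inter> P j = {}"
proof -
  have fin: "finite S" using rp S unfolding r_partite_def by (meson finite_subset)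
  define cls where "cls x = (SOME i. i < r \<and> x \<in> P i)" for x
  have cl: "cls x < r \<and> x \<in> P (cls x)" if "x \<in> S" for x
  proof -
    have "\<exists>i. i < r \<and> x \<in> P i" using rp S that unfolding r_partite_def by blast
    then show ?thesis unfolding cls_def by (rule someI_ex)
  qed
  have "card (cls ` S) \<le> card S" using fin by (rule card_image_le)
  hence "card (cls ` S) < card {..<r}" using c by simp
  hence "\<not> {..<r} \<subseteq> cls ` S" by (meson card_mono finite_imageI fin not_le)
  then obtain j where j: "j < r" "j \<notin> cls ` S" by auto
  have "S \<inter> P j = {}"
  proof (rule ccontr)
    assume "S \<inter> P j \<noteq> {}"
    then obtain x where x: "x \<in> S" "x \<in> P j" by auto
    have "cls x = j"
      using cl[OF x(1)] x(2) j(1) rp unfolding r_partite_def by blast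
    thus False using j x by auto
  qed
  thus ?thesis using j by blast
qed

lemma common_nbr:
  assumes rp: "r_partite r V E P" and bal: "balanced r P n"
    and hd: "\<forall>i<r. \<forall>j<r. i \<noteq> j \<longrightarrow> (\<forall>x\<in>P i. d \<le> card {y \<in> P j. E x y})"
    and S: "S \<subseteq> V" and j: "j < r" and dis: "S \<inter> P j = {}"
    and c: "card S * (n - d) < n"
  shows "\<exists>y\<in>P j. \<forall>x\<in>S. E x y"
proof (rule ccontr)
  assume "\<not> ?thesis"
  hence sub: "P j \<subseteq> (\<Union>x\<in>S. {y \<in> P j. \<not> E x y})" by auto
  have finV: "finite V" using rp unfolding r_partite_def by simp
  have fin: "finite S" using finV S by (meson finite_subset)
  have PjV: "P j \<subseteq> V" using rp j unfolding r_partite_def by blast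
  have finP: "finite (P j)" using finV PjV by (meson finite_subset)
  have cP: "card (P j) = n" using bal j unfolding balanced_def by simp
  have each: "card {y \<in> P j. \<not> E x y} \<le> n - d" if x: "x \<in> S" for x
  proof -
    obtain i where i: "i < r" "x \<in> P i" using rp S x unfolding r_partite_def by blast
    have "i \<noteq> j" using i dis x by blast
    hence "d \<le> card {y \<in> P j. E x y}" using hd i j by blast
    moreover have "card {y \<in> P j. E x y} + card {y \<in> P j. \<not> E x y} = n"
    proof -
      have "{y \<in> P j. E x y} \<union> {y \<in> P j. \<not> E x y} = P j" by auto
      moreover have "{y \<in> P j. E x y} \<inter> {y \<in> P j. \<not> E x y} = {}" by auto
      ultimately show ?thesis using finP cP card_Un_disjoint
        by (metis (no_types, lifting) finite_Un)
    qed
    ultimately show ?thesis by linarith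
  qed
  have "n \<le> card (\<Union>x\<in>S. {y \<in> P j. \<not> E x y})"
    using sub cP by (metis (no_types, lifting) card_mono fin finP finite_UN_I mem_Collect_eq rev_finite_subset subsetI)
  also have "\<dots> \<le> (\<Sum>x\<in>S. card {y \<in> P j. \<not> E x y})" by (rule card_UN_le[OF fin])
  also have "\<dots> \<le> (\<Sum>x\<in>S. n - d)" by (rule sum_mono) (rule each)
  also have "\<dots> = card S * (n - d)" by simp
  finally show False using c by simp
qed

lemma extend:
  assumes rp: "r_partite r V E P" and bal: "balanced r P n"
    and hd: "\<forall>i<r. \<forall>j<r. i \<noteq> j \<longrightarrow> (\<forall>x\<in>P i. d \<le> card {y \<in> P j. E x y})"
    and key: "(r - 1) * (n - d) < n"
  shows "S \<subseteq> V \<Longrightarrow> (\<forall>x\<in>S. \<forall>y\<in>S. x \<noteq> y \<longrightarrow> E x y) \<Longrightarrow> card S \<le> r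
     \<Longrightarrow> \<exists>K. is_Kr r V E K \<and> S \<subseteq> K"
proof (induction "r - card S" arbitrary: S rule: less_induct)
  case less
  have finV: "finite V" using rp unfolding r_partite_def by simp
  have fin: "finite S" using finV less.prems(1) by (meson finite_subset)
  show ?case
  proof (cases "card S = r")
    case True
    then show ?thesis using less.prems fin unfolding is_Kr_def by blast
  next
    case False
    hence lt: "card S < r" using less.prems(3) by simp
    then obtain j where j: "j < r" "S \<inter> P j = {}" using free_class[OF rp less.prems(1)] by blast
    have "card S \<le> r - 1" using lt by simp
    hence "card S * (n - d) \<le> (r - 1) * (n - d)" by (rule mult_right_mono) simp
    hence "card S * (n - d) < n" using key by linarith
    then obtain w where w: "w \<in> P j" "\<forall>x\<in>S. E x w"
      using common_nbr[OF rp bal hd less.prems(1) j] by blast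
    have wV: "w \<in> V" using rp j w unfolding r_partite_def by blast
    have wS: "w \<notin> S" using j w by blast
    have sym: "\<forall>x y. E x y \<longrightarrow> E y x" using rp unfolding r_partite_def by blast
    let ?S = "insert w S"
    have c2: "card ?S = Suc (card S)" using fin wS by simp
    have "\<exists>K. is_Kr r V E K \<and> ?S \<subseteq> K"
      apply (rule less.hyps)
      using c2 lt apply simp
      using wV less.prems(1) apply simp
      using less.prems(2) w(2) sym apply blast
      using c2 lt by simp
    thus ?thesis by blast
  qed
qed

theorem proposition2p4:
  fixes r n :: nat and V :: "'a set" and E :: "'a \<Rightarrow> 'a \<Rightarrow> bool" and P :: "nat \<Rightarrow> 'a set"
  assumes "r \<ge> 3"
    and "r_partite r V E P"
    and "balanced r P n"
    and "real (delta_star r E P) > (1 - 1 / (real r - 1)) * real n"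
  shows "\<forall>u\<in>V. \<forall>v\<in>V. \<exists>K K'. is_Kr r V E K \<and> is_Kr r V E K' \<and>
           u \<in> K \<and> v \<in> K' \<and> K \<inter> K' \<noteq> {}"
proof (intro ballI)
  fix u v assume u: "u \<in> V" and v: "v \<in> V"
  note rp = assms(2) and bal = assms(3)
  have finV: "finite V" using rp unfolding r_partite_def by simp
  define Q where "Q m = (\<forall>i<r. \<forall>j<r. i \<noteq> j \<longrightarrow> (\<forall>x\<in>P i. m \<le> card {y \<in> P j. E x y}))" for m
  define d where "d = delta_star r E P"
  have dQ: "d = (GREATEST m. Q m)" unfolding d_def delta_star_def Q_def by simp
  have PV: "\<And>i. i < r \<Longrightarrow> P i \<subseteq> V" using rp unfolding r_partite_def by blast
  have finP: "\<And>i. i < r \<Longrightarrow> finite (P i)" using PV finV finite_subset by blast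
  obtain i0 where i0: "i0 < r" "u \<in> P i0" using rp u unfolding r_partite_def by blast
  have n0: "n \<noteq> 0"
  proof
    assume "n = 0"
    moreover have "finite (P i0)" using finP i0 by blast
    ultimately show False using bal i0 unfolding balanced_def by auto
  qed
  have bound: "m \<le> n" if "Q m" for m
  proof -
    define j where "j = (if i0 = 0 then 1 else (0::nat))"
    have j: "j < r" "j \<noteq> i0" using assms(1) unfolding j_def by auto
    have "m \<le> card {y \<in> P j. E u y}" using that j i0 unfolding Q_def by blast
    also have "\<dots> \<le> card (P j)"
    proof (rule card_mono)
      show "finite (P j)" using finP j by blast
    qed auto
    finally show ?thesis using bal j unfolding balanced_def by simp
  qed
  have Qd: "Q d" unfolding dQ
    by (rule GreatestI_nat[where k=0 and b=n]) (auto simp: Q_def bound)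
  have dn: "d \<le> n" using bound Qd by blast
  have hd: "\<forall>i<r. \<forall>j<r. i \<noteq> j \<longrightarrow> (\<forall>x\<in>P i. d \<le> card {y \<in> P j. E x y})"
    using Qd unfolding Q_def .
  have key: "(r - 1) * (n - d) < n"
  proof -
    have r1: "real r - 1 > 0" using assms(1) by simp
    have "real d > (1 - 1 / (real r - 1)) * real n" using assms(4) d_def by simp
    hence "real d * (real r - 1) > ((real r - 1) - 1) * real n"
      using r1 by (simp add: field_simps)
    hence "(real r - 1) * (real n - real d) < real n" by (simp add: algebra_simps)
    moreover have "real ((r - 1) * (n - d)) = (real r - 1) * (real n - real d)"
      using dn assms(1) by (simp add: of_nat_diff)
    ultimately have "real ((r - 1) * (n - d)) < real n" by simp
    thus ?thesis by linarith
  qed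
  have c2: "card {u, v} \<le> 2" by (cases "u = v") auto
  have c: "card {u, v} < r" using assms(1) c2 by simp
  obtain j where j: "j < r" "{u, v} \<inter> P j = {}" using free_class[OF rp _ c] u v by blast
  have "card {u, v} * (n - d) \<le> (r - 1) * (n - d)"
    using assms(1) c2 by (intro mult_right_mono) auto
  hence "card {u, v} * (n - d) < n" using key by linarith
  then obtain w where w: "w \<in> P j" "E u w" "E v w"
    using common_nbr[OF rp bal hd _ j] u v by blast
  have wV: "w \<in> V" using rp j w unfolding r_partite_def by blast
  have sym: "\<forall>x y. E x y \<longrightarrow> E y x" using rp unfolding r_partite_def by blast
  have "\<exists>K. is_Kr r V E K \<and> {u, w} \<subseteq> K"
    by (rule extend[OF rp bal hd key]) (use u wV w sym assms(1) in \<open>auto simp: card_insert_if\<close>)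
  moreover have "\<exists>K. is_Kr r V E K \<and> {v, w} \<subseteq> K"
    by (rule extend[OF rp bal hd key]) (use v wV w sym assms(1) in \<open>auto simp: card_insert_if\<close>)
  ultimately obtain K K' where "is_Kr r V E K" "{u, w} \<subseteq> K" "is_Kr r V E K'" "{v, w} \<subseteq> K'"
    by blast
  then show "\<exists>K K'. is_Kr r V E K \<and> is_Kr r V E K' \<and> u \<in> K \<and> v \<in> K' \<and> K \<inter> K' \<noteq> {}"
    by blast
qed

end
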